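(* Let $\pi_1,\pi_2:\mathbb P^3\dashrightarrow\mathbb P^2$ be linear projections with centers $c_1\neq c_2$ and fundamental matrix $F$. Under the bijection between lines $\ell_F\subset\mathbb P(\mathbb C^{3\times3})$ through $F$ and quadrics $Q\subset\mathbb P^3$ through $c_1,c_2$, the quadric $Q$ corresponding to $\ell_F$ is obtained as follows: for any $M\in\ell_F$ with $M\neq F$, $Q$ is cut out by the equation $\pi_2(p)^\top M\pi_1(p)=0$.
   Context: Work over $\mathbb C$. A linear projection $\pi:\mathbb P^3\dashrightarrow\mathbb P^2$ is $p\mapsto Ap$, $A\in\mathbb C^{3\times4}$ of rank three, with center spanning $\ker A$. The fundamental matrix of $(\pi_1,\pi_2)$ is the rank-two $F\in\mathbb P(\mathbb C^{3\times3})$ with $\pi_2(p)^\top F\pi_1(p)=0$ for all $p\in\mathbb P^3$. The claim includes that this $Q$ does not depend on the choice of $M\in\ell_F\setminus\{F\}$ and that $\ell_F\mapsto Q$ is a bijection onto the quadrics through $c_1,c_2$. *)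

theory Defs
  imports "HOL-Analysis.Analysis"
begin

text \<open>Complex 3x3 matrices are elements of complex^3^3; a projection is a
complex^4^3 matrix (3 rows, 4 columns) acting by matrix-vector product.\<close>

definition mlin :: "complex \<Rightarrow> complex^'n^'m \<Rightarrow> complex \<Rightarrow> complex^'n^'m \<Rightarrow> complex^'n^'m" where
  "mlin a X b Y = (\<chi> i j. a * X$i$j + b * Y$i$j)"

text \<open>The (complex) linear span of a single matrix F, i.e. the point [F] plus 0.\<close>
definition mspan1 :: "complex^'n^'m \<Rightarrow> (complex^'n^'m) set" where
  "mspan1 F = {X. \<exists>a. X = (\<chi> i j. a * F$i$j)}"

text \<open>Affine cone of the projective line through [F] and [M] (span of F and M).\<close>
definition mline :: "complex^'n^'m \<Rightarrow> complex^'n^'m \<Rightarrow> (complex^'n^'m) set" where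
  "mline F M = {X. \<exists>a b. X = mlin a F b M}"

definition line_through :: "complex^'n^'m \<Rightarrow> (complex^'n^'m) set \<Rightarrow> bool" where
  "line_through F L \<longleftrightarrow> (\<exists>M. M \<notin> mspan1 F \<and> L = mline F M)"

definition bil :: "complex^'m \<Rightarrow> complex^'n^'m \<Rightarrow> complex^'n \<Rightarrow> complex" where
  "bil u M v = (\<Sum>i\<in>UNIV. \<Sum>j\<in>UNIV. u$i * M$i$j * v$j)"

definition qM :: "complex^4^3 \<Rightarrow> complex^4^3 \<Rightarrow> complex^3^3 \<Rightarrow> complex^4 \<Rightarrow> complex" where
  "qM A1 A2 M p = bil (A2 *v p) M (A1 *v p)"

definition quad_form :: "complex^4^4 \<Rightarrow> complex^4 \<Rightarrow> complex" where
  "quad_form S p = (\<Sum>i\<in>UNIV. \<Sum>j\<in>UNIV. S$i$j * p$i * p$j)"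

text \<open>A quadric in P^3 is represented by a nonzero quadratic form on C^4
 (up to a nonzero scalar, see same_quadric).\<close>
definition is_quadric :: "(complex^4 \<Rightarrow> complex) \<Rightarrow> bool" where
  "is_quadric q \<longleftrightarrow> (\<exists>S. \<forall>p. q p = quad_form S p) \<and> (\<exists>p. q p \<noteq> 0)"

definition same_quadric :: "(complex^4 \<Rightarrow> complex) \<Rightarrow> (complex^4 \<Rightarrow> complex) \<Rightarrow> bool" where
  "same_quadric q r \<longleftrightarrow> (\<exists>t. t \<noteq> 0 \<and> (\<forall>p. q p = t * r p))"

end

theory Submission
  imports Defs
begin

lemma bil_alt: "bil u M v = (\<Sum>i\<in>UNIV. u$i * (M *v v)$i)"
  by (simp add: bil_def matrix_vector_mult_def sum_distrib_left mult.assoc)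

lemma sum_mv_swap: "(\<Sum>i\<in>UNIV. (B *v u)$i * w$i) = (\<Sum>k\<in>UNIV. u$k * (transpose B *v w)$k)"
  for B :: "'a::comm_ring_1^'n^'m"
  apply (simp add: matrix_vector_mult_def transpose_def sum_distrib_left sum_distrib_right)
  apply (subst sum.swap)
  apply (simp add: mult_ac)
  done

lemma bil_trans: "bil (B *v u) M (C *v v) = bil u (transpose B ** M ** C) v"
  unfolding bil_alt
  by (simp add: sum_mv_swap matrix_vector_mul_assoc matrix_mul_assoc)

lemma quad_bil: "quad_form S p = bil p S p"
  by (simp add: quad_form_def bil_def mult_ac)

lemma quad_trans: "quad_form S (P *v x) = quad_form (transpose P ** S ** P) x"
  by (simp add: quad_bil bil_trans)

lemma qM_quad: "qM A1 A2 M p = quad_form (transpose A2 ** M ** A1) p"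
  by (simp add: qM_def quad_bil bil_trans[symmetric] matrix_vector_mul_lid)

lemma bil_lin: "bil u (mlin a X b Y) v = a * bil u X v + b * bil u Y v"
  by (simp add: bil_def mlin_def sum_distrib_left sum.distrib algebra_simps)

lemma qM_lin: "qM A1 A2 (mlin a X b Y) p = a * qM A1 A2 X p + b * qM A1 A2 Y p"
  by (simp add: qM_def bil_lin)

lemma scal_mid: "X ** (\<chi> i j. a * Y$i$j) ** Z = (\<chi> i j. a * (X ** Y ** Z)$i$j)"
  for X Y Z :: "'a::comm_ring_1^'n^'n"
  by (simp add: vec_eq_iff matrix_matrix_mult_def sum_distrib_left sum_distrib_right algebra_simps)

definition f1 :: "complex^4 \<Rightarrow> complex^3" where
  "f1 x = (\<chi> i. if i = 1 then x$2 else if i = 2 then x$3 else x$4)"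
definition f2 :: "complex^4 \<Rightarrow> complex^3" where
  "f2 x = (\<chi> i. if i = 1 then x$1 else if i = 2 then x$3 else x$4)"
definition xv :: "complex \<Rightarrow> complex \<Rightarrow> complex \<Rightarrow> complex \<Rightarrow> complex^4" where
  "xv a b c d = (\<chi> i. if i = 1 then a else if i = 2 then b else if i = 3 then c else d)"

lemma xv_nth[simp]: "xv a b c d $ 1 = a" "xv a b c d $ 2 = b" "xv a b c d $ 3 = c" "xv a b c d $ 4 = d"
  by (simp_all add: xv_def)

lemma f_nth[simp]: "f1 x $ 1 = x$2" "f1 x $ 2 = x$3" "f1 x $ 3 = x$4"
   "f2 x $ 1 = x$1" "f2 x $ 2 = x$3" "f2 x $ 3 = x$4"
  by (simp_all add: f1_def f2_def)

lemma bn_expand: "bil (f2 x) N (f1 x) =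
   N$1$1 * x$1 * x$2 + N$1$2 * x$1 * x$3 + N$1$3 * x$1 * x$4
 + N$2$1 * x$3 * x$2 + N$2$2 * x$3 * x$3 + N$2$3 * x$3 * x$4
 + N$3$1 * x$4 * x$2 + N$3$2 * x$4 * x$3 + N$3$3 * x$4 * x$4"
  by (simp add: bil_def sum_3 algebra_simps)

definition K0 :: "complex \<Rightarrow> complex^3^3" where
  "K0 k = (\<chi> i j. if i = 2 \<and> j = 3 then k else if i = 3 \<and> j = 2 then - k else 0)"

lemma bn_kernel:
  assumes "\<forall>x. bil (f2 x) N (f1 x) = 0"
  shows "N = K0 (N$2$3)"
proof -
  have e: "\<And>a b c d. bil (f2 (xv a b c d)) N (f1 (xv a b c d)) = 0" using assms by blast
  note e' = e[unfolded bn_expand, simplified]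
  have 1: "N$2$2 = 0" using e'[of 0 0 1 0] by simp
  have 2: "N$3$3 = 0" using e'[of 0 0 0 1] by simp
  have 3: "N$1$1 = 0" using e'[of 1 1 0 0] by simp
  have 4: "N$1$2 = 0" using e'[of 1 0 1 0] 1 by simp
  have 5: "N$1$3 = 0" using e'[of 1 0 0 1] 2 by simp
  have 6: "N$2$1 = 0" using e'[of 0 1 1 0] 1 by simp
  have 7: "N$3$1 = 0" using e'[of 0 1 0 1] 2 by simp
  have 8: "N$3$2 = - N$2$3" using e'[of 0 0 1 1] 1 2 by (simp add: eq_neg_iff_add_eq_0 add.commute)
  show ?thesis
    unfolding K0_def vec_eq_iff forall_3 using 1 2 3 4 5 6 7 8 by simp
qed

lemma bn_surj:
  assumes "S$1$1 = 0" "S$2$2 = 0"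
  shows "\<exists>N. \<forall>x. bil (f2 x) N (f1 x) = quad_form S x"
proof -
  define N :: "complex^3^3" where "N = (\<chi> i j.
     if i = 1 then (if j = 1 then S$1$2 + S$2$1 else if j = 2 then S$1$3 + S$3$1 else S$1$4 + S$4$1)
     else if i = 2 then (if j = 1 then S$2$3 + S$3$2 else if j = 2 then S$3$3 else S$3$4 + S$4$3)
     else (if j = 1 then S$2$4 + S$4$2 else if j = 2 then 0 else S$4$4))"
  have "bil (f2 x) N (f1 x) = quad_form S x" for x
    unfolding bn_expand quad_form_def sum_4 using assms
    by (simp add: N_def algebra_simps)
  then show ?thesis by blast
qed

lemma rank3_surj:
  fixes A :: "complex^4^3"
  assumes "rank A = 3"
  shows "surj ((*v) A)"
proof -
  define R where "R = rows A"
  have R: "R = (\<lambda>i. row i A) ` UNIV" unfolding R_def rows_def by auto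
  have fin: "finite R" unfolding R by simp
  have c3: "card R \<le> 3" unfolding R using card_image_le[of "UNIV::3 set" "\<lambda>i. row i A"] by simp
  have d3: "vec.dim R = 3" using assms unfolding row_rank_def_gen R_def by simp
  have "vec.dim R \<le> card R" by (rule vec.dim_le_card[OF vec.span_superset fin])
  hence cR: "card R = 3" using c3 d3 by simp
  have ind: "vec.independent R" using vec.card_eq_dim[of R R, OF order_refl _ fin] cR d3 vec.span_superset by simp
  have inj: "inj (\<lambda>i. row i A)"
    by (rule eq_card_imp_inj_on) (use cR R in simp_all)
  have "\<forall>c. sum (\<lambda>i::3. c i *s row i A) UNIV = 0 \<longrightarrow> (\<forall>i. c i = 0)"
  proof (intro allI impI)
    fix c :: "3 \<Rightarrow> complex" and i
    assume h: "sum (\<lambda>i::3. c i *s row i A) UNIV = 0"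
    have invr: "inv (\<lambda>i. row i A) (row j A) = j" for j using inv_f_f[OF inj, of j] by simp
    define c' where "c' = (\<lambda>v. c (inv (\<lambda>i. row i A) v))"
    have "(\<Sum>v\<in>R. c' v *s v) = sum (\<lambda>i::3. c' (row i A) *s row i A) UNIV"
      unfolding R by (rule sum.reindex[OF inj, where g="\<lambda>v. c' v *s v", simplified])
    also have "\<dots> = sum (\<lambda>i::3. c i *s row i A) UNIV"
      unfolding c'_def by (simp add: invr)
    finally have "(\<Sum>v\<in>R. c' v *s v) = 0" using h by simp
    hence "\<forall>v\<in>R. c' v = 0" using ind vec.independent_explicit by blast
    hence "c' (row i A) = 0" unfolding R by blast
    thus "c i = 0" unfolding c'_def by (simp add: invr)
  qed
  hence "\<exists>B::complex^3^4. A ** B = mat 1" using matrix_right_invertible_independent_rows by blast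
  thus ?thesis using matrix_right_invertible_surjective by blast
qed
lemma basis_ext:
  fixes c1 c2 :: "complex^4"
  assumes "c1 \<noteq> 0" "c2 \<noteq> 0" "\<forall>k::complex. c1 \<noteq> k *s c2"
  shows "\<exists>P Q :: complex^4^4. P ** Q = mat 1 \<and> Q ** P = mat 1 \<and> P *v xv 1 0 0 0 = c1 \<and> P *v xv 0 1 0 0 = c2"
proof -
  have ne: "c1 \<noteq> c2" using assms(3)[rule_format, of 1] by auto
  have i2: "vec.independent {c2}" using assms(2) vec.independent_insert[of c2 "{}"] by simp
  have "c1 \<notin> vec.span {c2}" using assms(3) by (auto simp: vec.span_singleton)
  hence i12: "vec.independent {c1, c2}" using vec.independent_insert[of c1 "{c2}"] i2 ne by simp
  define T where "T = vec.extend_basis {c1, c2}"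
  have sub: "{c1,c2} \<subseteq> T" and indT: "vec.independent T" and spT: "vec.span T = UNIV"
    using vec.extend_basis_superset[OF i12] vec.independent_extend_basis[OF i12] vec.span_extend_basis[OF i12]
    unfolding T_def by auto
  have finT: "finite T" using indT vec.finiteI_independent by blast
  have "card T = vec.dim (UNIV :: (complex^4) set)"
    using vec.basis_card_eq_dim[of T UNIV] indT spT by simp
  hence cT: "card T = 4" using vec_dim_card[where 'n=4, where 'a=complex] by simp
  have "card (T - {c1,c2}) = 2" using card_Diff_subset[OF _ sub] cT ne finT by simp
  then obtain u v where uv: "T - {c1,c2} = {u,v}" "u \<noteq> v" by (auto simp: card_2_iff)
  have Teq: "T = {c1,c2,u,v}" using uv sub by blast
  have d: "u \<noteq> c1" "u \<noteq> c2" "v \<noteq> c1" "v \<noteq> c2" using uv(1) by blast+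
  define P :: "complex^4^4" where
    "P = (\<chi> i j. (if j = 1 then c1 else if j = 2 then c2 else if j = 3 then u else v)$i)"
  have Pxv: "P *v xv a b c d = a *s c1 + b *s c2 + c *s u + d *s v" for a b c d
    by (simp add: vec_eq_iff P_def matrix_vector_mult_def sum_4 algebra_simps)
  have "surj ((*v) P)"
  proof -
    have "y \<in> range ((*v) P)" for y
    proof -
      have "y \<in> vec.span T" using spT by simp
      then obtain f where "y = (\<Sum>w\<in>T. f w *s w)" using vec.span_finite[OF finT] by auto
      also have "\<dots> = f c1 *s c1 + f c2 *s c2 + f u *s u + f v *s v"
        unfolding Teq using ne d uv(2) by (simp add: algebra_simps)
      also have "\<dots> = P *v xv (f c1) (f c2) (f u) (f v)" by (simp add: Pxv)
      finally show ?thesis by blast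
    qed
    thus ?thesis by blast
  qed
  then obtain Q where PQ: "P ** Q = mat 1" using matrix_right_invertible_surjective by blast
  hence QP: "Q ** P = mat 1" using matrix_left_right_inverse by blast
  show ?thesis using PQ QP by (intro exI[of _ P] exI[of _ Q]) (simp add: Pxv)
qed

lemma setup1:
  fixes A :: "complex^4^3" and P Q :: "complex^4^4" and c :: "complex^4"
  assumes rk: "rank A = 3" and Ac: "A *v c = 0" and PQ: "P ** Q = mat 1" and Pc: "P *v xv 1 0 0 0 = c"
  shows "\<exists>B Bi :: complex^3^3. B ** Bi = mat 1 \<and> Bi ** B = mat 1 \<and> (\<forall>p. A *v p = B *v f1 (Q *v p))"
proof -
  define B :: "complex^3^3" where "B = (\<chi> i j. (A ** P)$i$(if j = 1 then 2 else if j = 2 then 3 else 4))"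
  have col: "P$k$1 = c$k" for k
    using arg_cong[OF Pc, of "\<lambda>v. v$k"] by (simp add: matrix_vector_mult_def sum_4)
  have z: "(A ** P)$i$1 = 0" for i
    using arg_cong[OF Ac, of "\<lambda>v. v$i"] by (simp add: matrix_matrix_mult_def matrix_vector_mult_def col)
  have Bf: "B *v f1 x = A *v (P *v x)" for x
  proof -
    have "A *v (P *v x) = (A ** P) *v x" by (simp add: matrix_vector_mul_assoc)
    thus ?thesis by (simp add: vec_eq_iff B_def matrix_vector_mult_def sum_3 sum_4 z)
  qed
  have key: "A *v p = B *v f1 (Q *v p)" for p
    by (simp add: Bf matrix_vector_mul_assoc PQ)
  have "surj ((*v) B)"
  proof -
    have "y \<in> range ((*v) B)" for y
    proof -
      obtain p where "y = A *v p" using rank3_surj[OF rk] by (metis surj_def)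
      thus ?thesis using key by blast
    qed
    thus ?thesis by blast
  qed
  then obtain Bi where "B ** Bi = mat 1" using matrix_right_invertible_surjective by blast
  moreover hence "Bi ** B = mat 1" using matrix_left_right_inverse by blast
  ultimately show ?thesis using key by blast
qed

lemma setup2:
  fixes A :: "complex^4^3" and P Q :: "complex^4^4" and c :: "complex^4"
  assumes rk: "rank A = 3" and Ac: "A *v c = 0" and PQ: "P ** Q = mat 1" and Pc: "P *v xv 0 1 0 0 = c"
  shows "\<exists>B Bi :: complex^3^3. B ** Bi = mat 1 \<and> Bi ** B = mat 1 \<and> (\<forall>p. A *v p = B *v f2 (Q *v p))"
proof -
  define B :: "complex^3^3" where "B = (\<chi> i j. (A ** P)$i$(if j = 1 then 1 else if j = 2 then 3 else 4))"
  have col: "P$k$2 = c$k" for k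
    using arg_cong[OF Pc, of "\<lambda>v. v$k"] by (simp add: matrix_vector_mult_def sum_4)
  have z: "(A ** P)$i$2 = 0" for i
    using arg_cong[OF Ac, of "\<lambda>v. v$i"] by (simp add: matrix_matrix_mult_def matrix_vector_mult_def col)
  have Bf: "B *v f2 x = A *v (P *v x)" for x
  proof -
    have "A *v (P *v x) = (A ** P) *v x" by (simp add: matrix_vector_mul_assoc)
    thus ?thesis by (simp add: vec_eq_iff B_def matrix_vector_mult_def sum_3 sum_4 z)
  qed
  have key: "A *v p = B *v f2 (Q *v p)" for p
    by (simp add: Bf matrix_vector_mul_assoc PQ)
  have "surj ((*v) B)"
  proof -
    have "y \<in> range ((*v) B)" for y
    proof -
      obtain p where "y = A *v p" using rank3_surj[OF rk] by (metis surj_def)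
      thus ?thesis using key by blast
    qed
    thus ?thesis by blast
  qed
  then obtain Bi where "B ** Bi = mat 1" using matrix_right_invertible_surjective by blast
  moreover hence "Bi ** B = mat 1" using matrix_left_right_inverse by blast
  ultimately show ?thesis using key by blast
qed
lemma rank_zero_c: "rank (0::complex^'n^'m) = 0"
  unfolding row_rank_def_gen rows_def by (simp add: row_def zero_vec_def[symmetric]) 

theorem mainTheorem11:
  fixes A1 A2 :: "complex^4^3" and c1 c2 :: "complex^4" and F :: "complex^3^3"
  assumes rk1: "rank A1 = 3" and rk2: "rank A2 = 3"
    and c1: "c1 \<noteq> 0" "A1 *v c1 = 0"
    and c2: "c2 \<noteq> 0" "A2 *v c2 = 0"
    and c12: "\<forall>k::complex. c1 \<noteq> k *s c2"
    and rkF: "rank F = 2"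
    and fund: "\<forall>p. bil (A2 *v p) F (A1 *v p) = 0"
  shows
    "(\<forall>L. line_through F L \<longrightarrow>
        (\<forall>M\<in>L - mspan1 F. is_quadric (qM A1 A2 M) \<and> qM A1 A2 M c1 = 0 \<and> qM A1 A2 M c2 = 0) \<and>
        (\<forall>M\<in>L - mspan1 F. \<forall>M'\<in>L - mspan1 F. same_quadric (qM A1 A2 M) (qM A1 A2 M'))) \<and>
     (\<forall>L L' M M'. line_through F L \<and> line_through F L' \<and> M \<in> L - mspan1 F \<and> M' \<in> L' - mspan1 F \<and>
        same_quadric (qM A1 A2 M) (qM A1 A2 M') \<longrightarrow> L = L') \<and>
     (\<forall>q. is_quadric q \<and> q c1 = 0 \<and> q c2 = 0 \<longrightarrow>
        (\<exists>L. line_through F L \<and> (\<exists>M\<in>L - mspan1 F. same_quadric q (qM A1 A2 M))))"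
proof -
  obtain P Q :: "complex^4^4" where PQ: "P ** Q = mat 1" and QP: "Q ** P = mat 1"
    and Pc1: "P *v xv 1 0 0 0 = c1" and Pc2: "P *v xv 0 1 0 0 = c2"
    using basis_ext[OF c1(1) c2(1) c12] by blast
  obtain B1 Bi1 where B1: "B1 ** Bi1 = mat 1" "Bi1 ** B1 = mat 1" and A1f: "\<forall>p. A1 *v p = B1 *v f1 (Q *v p)"
    using setup1[OF rk1 c1(2) PQ Pc1] by blast
  obtain B2 Bi2 where B2: "B2 ** Bi2 = mat 1" "Bi2 ** B2 = mat 1" and A2f: "\<forall>p. A2 *v p = B2 *v f2 (Q *v p)"
    using setup2[OF rk2 c2(2) PQ Pc2] by blast
  define NM where "NM M = transpose B2 ** M ** B1" for M
  have qN: "qM A1 A2 M p = bil (f2 (Q *v p)) (NM M) (f1 (Q *v p))" for M p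
    unfolding qM_def NM_def using A1f A2f by (simp add: bil_trans)
  have QPx: "Q *v (P *v x) = x" for x by (simp add: matrix_vector_mul_assoc QP)
  have PQx: "P *v (Q *v x) = x" for x by (simp add: matrix_vector_mul_assoc PQ)
  have T2: "transpose Bi2 ** transpose B2 = mat 1" using B2(1) by (metis matrix_transpose_mul transpose_mat)
  have Minv: "M = transpose Bi2 ** NM M ** Bi1" for M
  proof -
    have "transpose Bi2 ** NM M ** Bi1 = (transpose Bi2 ** transpose B2) ** M ** (B1 ** Bi1)"
      unfolding NM_def by (simp add: matrix_mul_assoc)
    thus ?thesis using T2 B1(1) by (simp add: matrix_mul_lid matrix_mul_rid)
  qed
  have NMinv: "NM (transpose Bi2 ** N ** Bi1) = N" for N
  proof -
    have T2': "transpose B2 ** transpose Bi2 = mat 1" using B2(2) by (metis matrix_transpose_mul transpose_mat)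
    have "NM (transpose Bi2 ** N ** Bi1) = (transpose B2 ** transpose Bi2) ** N ** (Bi1 ** B1)"
      unfolding NM_def by (simp add: matrix_mul_assoc)
    thus ?thesis using T2' B1(2) by (simp add: matrix_mul_lid matrix_mul_rid)
  qed
  have kerN: "NM M = K0 (NM M $2$3)" if "\<forall>p. qM A1 A2 M p = 0" for M
  proof (rule bn_kernel, rule allI)
    fix x
    show "bil (f2 x) (NM M) (f1 x) = 0" using that[rule_format, of "P *v x"] by (simp add: qN QPx)
  qed
  have qF: "qM A1 A2 F p = 0" for p using fund by (simp add: qM_def)
  define kF where "kF = NM F $2$3"
  have NF: "NM F = K0 kF" unfolding kF_def by (rule kerN) (simp add: qF)
  have kF0: "kF \<noteq> 0"
  proof
    assume "kF = 0"
    hence "NM F = 0" using NF by (simp add: K0_def vec_eq_iff)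
    hence "F = 0" using Minv[of F] by simp
    thus False using rkF rank_zero_c[where 'n=3 and 'm=3] by simp
  qed
  have K: "M \<in> mspan1 F" if "\<forall>p. qM A1 A2 M p = 0" for M
  proof -
    define m where "m = NM M $2$3"
    have "NM M = (\<chi> i j. (m / kF) * NM F $i$j)"
      using kerN[OF that] NF kF0 unfolding m_def[symmetric] by (simp add: K0_def vec_eq_iff)
    hence "M = (\<chi> i j. (m / kF) * F $i$j)"
      using Minv[of M] Minv[of F] scal_mid by metis
    thus ?thesis unfolding mspan1_def by blast
  qed
  have Sj: "\<exists>M. \<forall>p. q p = qM A1 A2 M p" if qq: "is_quadric q" "q c1 = 0" "q c2 = 0" for q
  proof -
    obtain S where S: "\<forall>p. q p = quad_form S p" using qq(1) unfolding is_quadric_def by blast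
    define S' where "S' = transpose P ** S ** P"
    have S'x: "quad_form S' x = q (P *v x)" for x unfolding S'_def using S by (simp add: quad_trans)
    have "S'$1$1 = 0" using S'x[of "xv 1 0 0 0"] Pc1 qq(2) by (simp add: quad_form_def sum_4)
    moreover have "S'$2$2 = 0" using S'x[of "xv 0 1 0 0"] Pc2 qq(3) by (simp add: quad_form_def sum_4)
    ultimately obtain N where N: "\<forall>x. bil (f2 x) N (f1 x) = quad_form S' x" using bn_surj by blast
    have "q p = qM A1 A2 (transpose Bi2 ** N ** Bi1) p" for p
      unfolding qN NMinv N[rule_format] S'x PQx ..
    thus ?thesis by blast
  qed
  have Z: "qM A1 A2 M c1 = 0 \<and> qM A1 A2 M c2 = 0" for M
    by (simp add: qM_def bil_def c1(2) c2(2))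
  have quadM: "is_quadric (qM A1 A2 M)" if "M \<notin> mspan1 F" for M
    unfolding is_quadric_def using K that by (metis qM_quad)
  have mlin_qM: "qM A1 A2 (mlin a F b M0) p = b * qM A1 A2 M0 p" for a b M0 p
    by (simp add: qM_lin qF)
  have b0: "b \<noteq> 0" if "mlin a F b M0 \<notin> mspan1 F" for a b M0
  proof
    assume "b = 0"
    hence "mlin a F b M0 = (\<chi> i j. a * F$i$j)" by (simp add: mlin_def)
    thus False using that unfolding mspan1_def by blast
  qed
  have lineeq: "mline F (mlin a F b M0) = mline F M0" if "b \<noteq> 0" for a b M0
  proof
    show "mline F (mlin a F b M0) \<subseteq> mline F M0"
    proof
      fix X assume "X \<in> mline F (mlin a F b M0)"
      then obtain x y where "X = mlin x F y (mlin a F b M0)" unfolding mline_def by blast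
      hence "X = mlin (x + y * a) F (y * b) M0" by (simp add: mlin_def vec_eq_iff algebra_simps)
      thus "X \<in> mline F M0" unfolding mline_def by blast
    qed
  next
    show "mline F M0 \<subseteq> mline F (mlin a F b M0)"
    proof
      fix X assume "X \<in> mline F M0"
      then obtain x y where "X = mlin x F y M0" unfolding mline_def by blast
      hence "X = mlin (x - y * a / b) F (y / b) (mlin a F b M0)" using that
        by (simp add: mlin_def vec_eq_iff field_simps)
      thus "X \<in> mline F (mlin a F b M0)" unfolding mline_def by blast
    qed
  qed
  have part1: "\<forall>L. line_through F L \<longrightarrow>
        (\<forall>M\<in>L - mspan1 F. is_quadric (qM A1 A2 M) \<and> qM A1 A2 M c1 = 0 \<and> qM A1 A2 M c2 = 0) \<and>
        (\<forall>M\<in>L - mspan1 F. \<forall>M'\<in>L - mspan1 F. same_quadric (qM A1 A2 M) (qM A1 A2 M'))"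
  proof (intro allI impI conjI ballI)
    fix L assume "line_through F L"
    then obtain M0 where L: "L = mline F M0" unfolding line_through_def by blast
    {
      fix M assume "M \<in> L - mspan1 F"
      thus "is_quadric (qM A1 A2 M)" "qM A1 A2 M c1 = 0" "qM A1 A2 M c2 = 0" using quadM Z by auto
    }
    fix M M' assume M: "M \<in> L - mspan1 F" and M': "M' \<in> L - mspan1 F"
    obtain a b where Ma: "M = mlin a F b M0" using M L unfolding mline_def by blast
    obtain a' b' where Ma': "M' = mlin a' F b' M0" using M' L unfolding mline_def by blast
    have "b \<noteq> 0" "b' \<noteq> 0" using b0 M M' Ma Ma' by blast+
    thus "same_quadric (qM A1 A2 M) (qM A1 A2 M')"
      unfolding same_quadric_def Ma Ma' mlin_qM
      by (intro exI[of _ "b / b'"]) (simp add: field_simps)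
  qed
  have part2: "\<forall>L L' M M'. line_through F L \<and> line_through F L' \<and> M \<in> L - mspan1 F \<and> M' \<in> L' - mspan1 F \<and>
        same_quadric (qM A1 A2 M) (qM A1 A2 M') \<longrightarrow> L = L'"
  proof (intro allI impI, elim conjE)
    fix L L' M M'
    assume "line_through F L" "line_through F L'" and M: "M \<in> L - mspan1 F" and M': "M' \<in> L' - mspan1 F"
      and sq: "same_quadric (qM A1 A2 M) (qM A1 A2 M')"
    obtain M0 where L: "L = mline F M0" using \<open>line_through F L\<close> unfolding line_through_def by blast
    obtain M0' where L': "L' = mline F M0'" using \<open>line_through F L'\<close> unfolding line_through_def by blast
    obtain a b where Ma: "M = mlin a F b M0" using M L unfolding mline_def by blast
    obtain a' b' where Ma': "M' = mlin a' F b' M0'" using M' L' unfolding mline_def by blast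
    have "b \<noteq> 0" "b' \<noteq> 0" using b0 M M' Ma Ma' by blast+
    hence LM: "L = mline F M" "L' = mline F M'" using L L' Ma Ma' lineeq by auto
    obtain t where t: "t \<noteq> 0" "\<forall>p. qM A1 A2 M p = t * qM A1 A2 M' p" using sq unfolding same_quadric_def by blast
    have "\<forall>p. qM A1 A2 (mlin 1 M (-t) M') p = 0" using t by (simp add: qM_lin)
    then obtain k where k: "mlin 1 M (-t) M' = (\<chi> i j. k * F$i$j)" using K unfolding mspan1_def by blast
    have "M = mlin k F t M'"
      using k by (simp add: mlin_def vec_eq_iff algebra_simps)
    thus "L = L'" using LM lineeq t(1) by simp
  qed
  have part3: "\<forall>q. is_quadric q \<and> q c1 = 0 \<and> q c2 = 0 \<longrightarrow>
        (\<exists>L. line_through F L \<and> (\<exists>M\<in>L - mspan1 F. same_quadric q (qM A1 A2 M)))"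
  proof (intro allI impI, elim conjE)
    fix q assume q: "is_quadric q" "q c1 = 0" "q c2 = 0"
    obtain M where M: "\<forall>p. q p = qM A1 A2 M p" using Sj[OF q] by blast
    have nM: "M \<notin> mspan1 F"
    proof
      assume "M \<in> mspan1 F"
      then obtain a where "M = (\<chi> i j. a * F$i$j)" unfolding mspan1_def by blast
      hence "M = mlin 0 F a F" by (simp add: mlin_def)
      hence "\<forall>p. q p = 0" using M mlin_qM qF by simp
      thus False using q(1) unfolding is_quadric_def by blast
    qed
    have "M \<in> mline F M" unfolding mline_def by (intro CollectI exI[of _ 0] exI[of _ 1]) (simp add: mlin_def vec_eq_iff)
    moreover have "line_through F (mline F M)" using nM unfolding line_through_def by blast
    moreover have "same_quadric q (qM A1 A2 M)" unfolding same_quadric_def using M by (intro exI[of _ 1]) simp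
    ultimately show "\<exists>L. line_through F L \<and> (\<exists>M\<in>L - mspan1 F. same_quadric q (qM A1 A2 M))"
      using nM by blast
  qed
  show ?thesis using part1 part2 part3 by blast
qed

end
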